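(* Let a particle of mass $m>0$ and charge $q$ move under the relativistic Lorentz force in an electromagnetic field whose potential $A^\mu(t,\mathbf x)=A^\mu(t,z)$ does not depend on the transverse coordinates $x,y$. Then for every motion there is a constant $\mathbf K^{\perp}\in\mathbb R^2$ such that, parametrizing by $\xi=ct-z$, $$\hat{\mathbf u}^{\perp}(\xi)=\frac{q}{mc^2}\big[\mathbf K^{\perp}-\hat{\mathbf A}^{\perp}(\xi,\hat z(\xi))\big],$$ and, setting $\hat v(\xi,z):=\big(\tfrac{q}{mc^2}\big)^2|\mathbf K^{\perp}-\hat{\mathbf A}^{\perp}(\xi,z)|^2$, the pair $(\hat z,\hat s)$ solves the one-degree-of-freedom system $$\hat z'=\frac{1+\hat v(\xi,\hat z)}{2\hat s^2}-\frac12,\qquad mc^2\hat s'=-q\hat E^z(\xi,\hat z)+\frac{mc^2}{2\hat s}\frac{\partial\hat v}{\partial z}(\xi,\hat z).$$ The remaining unknowns are then obtained as $\hat{\mathbf x}(\xi)=\hat{\mathbf x}(\xi_0)+\int_{\xi_0}^{\xi}d\zeta\,\hat{\mathbf u}(\zeta)/\hat s(\zeta)$ (with $\hat u^z=\hat\gamma-\hat s$, $\hat\gamma=(1+\hat v+\hat s^2)/(2\hat s)$) and $c\,\hat t(\xi)=\xi+\hat z(\xi)$; inverting the strictly increasing map $\xi\mapsto\hat t(\xi)$ gives $\mathbf x(t)=\hat{\mathbf x}(\xi(t))$.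
   Context: Coordinates $\mathbf x=(x,y,z)$, $\perp$ denotes $(x,y)$-components; $\mathbf E=-\partial_t\mathbf A/c-\nabla A^0$, $\mathbf B=\nabla\wedge\mathbf A$. Equations of motion: $\dot{\mathbf p}=q\mathbf E+\frac{\mathbf p}{\sqrt{m^2c^2+\mathbf p^2}}\wedge q\mathbf B$, $\dot{\mathbf x}=c\mathbf p/\sqrt{m^2c^2+\mathbf p^2}$. $\mathbf u=\mathbf p/mc$, $\gamma=\sqrt{1+\mathbf u^2}$, $s=\gamma-u^z>0$. Since $|\dot{\mathbf x}|<c$, $\xi(t)=ct-z(t)$ is strictly increasing; $\hat f(\xi)$ denotes a dynamical variable as a function of $\xi$; for a field $f(t,z)$, $\hat f(\xi,z):=f((\xi+z)/c,z)$; prime is $d/d\xi$. *)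

theory Defs
  imports "HOL-Analysis.Analysis"
begin

text \<open>Potentials A^mu(t,z) are given as functions of (t,z) only.
  Partial derivatives with respect to t and z.\<close>

definition pd_t :: "(real \<Rightarrow> real \<Rightarrow> real) \<Rightarrow> real \<Rightarrow> real \<Rightarrow> real" where
  "pd_t f t z = deriv (\<lambda>\<tau>. f \<tau> z) t"

definition pd_z :: "(real \<Rightarrow> real \<Rightarrow> real) \<Rightarrow> real \<Rightarrow> real \<Rightarrow> real" where
  "pd_z f t z = deriv (\<lambda>w. f t w) z"

text \<open>Fields: E = - d_t A / c - grad A^0, B = curl A, with A independent of x,y.\<close>

definition Efx :: "real \<Rightarrow> (real \<Rightarrow> real \<Rightarrow> real) \<Rightarrow> real \<Rightarrow> real \<Rightarrow> real" where
  "Efx c Ax t z = - pd_t Ax t z / c"          (* d_x A^0 = 0 *)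

definition Efy :: "real \<Rightarrow> (real \<Rightarrow> real \<Rightarrow> real) \<Rightarrow> real \<Rightarrow> real \<Rightarrow> real" where
  "Efy c Ay t z = - pd_t Ay t z / c"          (* d_y A^0 = 0 *)

definition Efz :: "real \<Rightarrow> (real \<Rightarrow> real \<Rightarrow> real) \<Rightarrow> (real \<Rightarrow> real \<Rightarrow> real) \<Rightarrow> real \<Rightarrow> real \<Rightarrow> real" where
  "Efz c A0 Az t z = - pd_t Az t z / c - pd_z A0 t z"

definition Bfx :: "(real \<Rightarrow> real \<Rightarrow> real) \<Rightarrow> (real \<Rightarrow> real \<Rightarrow> real) \<Rightarrow> real \<Rightarrow> real \<Rightarrow> real" where
  "Bfx Ay Az t z = 0 - pd_z Ay t z"           (* d_y A^z - d_z A^y *)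

definition Bfy :: "(real \<Rightarrow> real \<Rightarrow> real) \<Rightarrow> (real \<Rightarrow> real \<Rightarrow> real) \<Rightarrow> real \<Rightarrow> real \<Rightarrow> real" where
  "Bfy Ax Az t z = pd_z Ax t z - 0"           (* d_z A^x - d_x A^z *)

definition Bfz :: "(real \<Rightarrow> real \<Rightarrow> real) \<Rightarrow> (real \<Rightarrow> real \<Rightarrow> real) \<Rightarrow> real \<Rightarrow> real \<Rightarrow> real" where
  "Bfz Ax Ay t z = 0"                         (* d_x A^y - d_y A^x *)

definition pden :: "real \<Rightarrow> real \<Rightarrow> real \<Rightarrow> real \<Rightarrow> real \<Rightarrow> real" where
  "pden m c a b d = sqrt ((m * c)\<^sup>2 + a\<^sup>2 + b\<^sup>2 + d\<^sup>2)"

definition lorentz_motion ::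
  "real \<Rightarrow> real \<Rightarrow> real \<Rightarrow> (real \<Rightarrow> real \<Rightarrow> real) \<Rightarrow> (real \<Rightarrow> real \<Rightarrow> real) \<Rightarrow>
   (real \<Rightarrow> real \<Rightarrow> real) \<Rightarrow> (real \<Rightarrow> real \<Rightarrow> real) \<Rightarrow> real set \<Rightarrow>
   (real \<Rightarrow> real) \<Rightarrow> (real \<Rightarrow> real) \<Rightarrow> (real \<Rightarrow> real) \<Rightarrow>
   (real \<Rightarrow> real) \<Rightarrow> (real \<Rightarrow> real) \<Rightarrow> (real \<Rightarrow> real) \<Rightarrow> bool" where
  "lorentz_motion m q c A0 Ax Ay Az I x y z px py pz \<longleftrightarrow>
     (\<forall>t\<in>I.
        let D = pden m c (px t) (py t) (pz t);
            bx = px t / D; by = py t / D; bz = pz t / D;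
            ex = Efx c Ax t (z t); ey = Efy c Ay t (z t); ez = Efz c A0 Az t (z t);
            Bx = Bfx Ay Az t (z t); By = Bfy Ax Az t (z t); Bz = Bfz Ax Ay t (z t)
        in (x has_real_derivative c * bx) (at t)
         \<and> (y has_real_derivative c * by) (at t)
         \<and> (z has_real_derivative c * bz) (at t)
         \<and> (px has_real_derivative q * ex + q * (by * Bz - bz * By)) (at t)
         \<and> (py has_real_derivative q * ey + q * (bz * Bx - bx * Bz)) (at t)
         \<and> (pz has_real_derivative q * ez + q * (bx * By - by * Bx)) (at t))"

definition hatf :: "real \<Rightarrow> (real \<Rightarrow> real \<Rightarrow> real) \<Rightarrow> real \<Rightarrow> real \<Rightarrow> real" where
  "hatf c f \<xi> w = f ((\<xi> + w) / c) w"

definition vhat :: "real \<Rightarrow> real \<Rightarrow> real \<Rightarrow> (real \<Rightarrow> real \<Rightarrow> real) \<Rightarrow> (real \<Rightarrow> real \<Rightarrow> real) \<Rightarrow>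
    real \<Rightarrow> real \<Rightarrow> real \<Rightarrow> real \<Rightarrow> real" where
  "vhat m q c Ax Ay Kx Ky \<xi> w =
     (q / (m * c\<^sup>2))\<^sup>2 * ((Kx - hatf c Ax \<xi> w)\<^sup>2 + (Ky - hatf c Ay \<xi> w)\<^sup>2)"

end

theory Submission
  imports Defs
begin

lemma partial_chain:
  fixes F :: "real \<Rightarrow> real \<Rightarrow> real"
  assumes dF: "(\<lambda>v. F (fst v) (snd v)) differentiable (at (a tt, b tt))"
    and da: "(a has_real_derivative a') (at tt within S)"
    and db: "(b has_real_derivative b') (at tt within S)"
  shows "((\<lambda>t. F (a t) (b t)) has_real_derivative
            (pd_t F (a tt) (b tt) * a' + pd_z F (a tt) (b tt) * b')) (at tt within S)"
proof -
  let ?G = "\<lambda>v. F (fst v) (snd v)"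
  from dF obtain L where L: "(?G has_derivative L) (at (a tt, b tt))"
    unfolding differentiable_def by blast
  have lin: "linear L" using L has_derivative_linear by blast
  have sc: "L (h *\<^sub>R w) = h * L w" for h w using linear_scale[OF lin] by simp
  have ad: "L (u + w) = L u + L w" for u w using linear_add[OF lin] by simp
  have p1: "((\<lambda>\<tau>. (\<tau>, b tt)) has_derivative (\<lambda>h. (h, 0))) (at (a tt))"
    by (auto intro!: derivative_eq_intros)
  have "((\<lambda>\<tau>. F \<tau> (b tt)) has_derivative (\<lambda>h. L (h, 0))) (at (a tt))"
    using has_derivative_compose[OF p1, of ?G L] L by simp
  moreover have "(\<lambda>h. L (h, 0)) = (*) (L (1,0))"
  proof
    fix h have "(h,0::real) = h *\<^sub>R (1,0)" by simp
    then show "L (h,0) = L (1,0) * h" using sc by (metis mult.commute)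
  qed
  ultimately have "((\<lambda>\<tau>. F \<tau> (b tt)) has_real_derivative L (1,0)) (at (a tt))"
    unfolding has_field_derivative_def by simp
  hence e1: "pd_t F (a tt) (b tt) = L (1,0)" unfolding pd_t_def by (rule DERIV_imp_deriv)
  have p2: "((\<lambda>w. (a tt, w)) has_derivative (\<lambda>h. (0, h))) (at (b tt))"
    by (auto intro!: derivative_eq_intros)
  have "((\<lambda>w. F (a tt) w) has_derivative (\<lambda>h. L (0, h))) (at (b tt))"
    using has_derivative_compose[OF p2, of ?G L] L by simp
  moreover have "(\<lambda>h. L (0, h)) = (*) (L (0,1))"
  proof
    fix h have "(0::real,h) = h *\<^sub>R (0,1)" by simp
    then show "L (0,h) = L (0,1) * h" using sc by (metis mult.commute)
  qed
  ultimately have "((\<lambda>w. F (a tt) w) has_real_derivative L (0,1)) (at (b tt))"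
    unfolding has_field_derivative_def by simp
  hence e2: "pd_z F (a tt) (b tt) = L (0,1)" unfolding pd_z_def by (rule DERIV_imp_deriv)
  have pab: "((\<lambda>t. (a t, b t)) has_derivative (\<lambda>h. (h * a', h * b'))) (at tt within S)"
    using has_derivative_Pair[OF da[unfolded has_field_derivative_def] db[unfolded has_field_derivative_def]]
    by (simp add: mult.commute)
  have "((\<lambda>t. F (a t) (b t)) has_derivative (\<lambda>h. L (h * a', h * b'))) (at tt within S)"
    using has_derivative_compose[OF pab, of ?G L] L by simp
  moreover have "(\<lambda>h. L (h * a', h * b')) = (*) (L (1,0) * a' + L (0,1) * b')"
  proof
    fix h
    have "(h * a', h * b') = (h*a') *\<^sub>R (1,0) + (h*b') *\<^sub>R (0::real,1::real)" by simp
    then have "L (h * a', h * b') = (h*a') * L (1,0) + (h*b') * L (0,1)"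
      using sc ad by metis
    then show "L (h * a', h * b') = (L (1,0) * a' + L (0,1) * b') * h"
      by (simp add: algebra_simps)
  qed
  ultimately show ?thesis unfolding has_field_derivative_def e1 e2 by simp
qed

lemma inv_deriv:
  fixes f g :: "real \<Rightarrow> real"
  assumes "open S" "x \<in> S" "continuous_on S f" "\<And>x. x \<in> S \<Longrightarrow> g (f x) = x"
    "(f has_real_derivative D) (at x)" "D \<noteq> 0"
  shows "(g has_real_derivative inverse D) (at (f x))"
  using has_derivative_inverse_strong[OF assms(1-4) assms(5)[unfolded has_field_derivative_def], of "(*) (inverse D)"]
    assms(6) unfolding has_field_derivative_def by (auto simp: fun_eq_iff)


lemma alg_z:
  fixes c g s ux uy uz :: real
  assumes "c > 0" "g > 0" "s > 0" "g^2 = 1 + ux^2 + uy^2 + uz^2" "s = g - uz"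
  shows "c * (uz / g) * inverse (c * (s / g)) = (1 + (ux^2 + uy^2)) / (2 * s^2) - 1/2"
proof -
  have g: "g = s + uz" using assms by simp
  have "1 + (ux^2 + uy^2) = s * (g + uz)" using assms(4) unfolding g by (simp add: power2_eq_square algebra_simps)
  then have h: "1 + (ux*ux + uy*uy) = s* s + 2 * s * uz" unfolding g by (simp add: power2_eq_square algebra_simps)
  have l: "c * (uz / g) * inverse (c * (s / g)) = uz / s" using assms(1-3) by (simp add: field_simps)
  show ?thesis unfolding l using assms(1-3) h by (simp add: field_simps power2_eq_square)
qed

lemma alg_g:
  fixes g s ux uy uz :: real
  assumes "g > 0" "s > 0" "g^2 = 1 + ux^2 + uy^2 + uz^2" "s = g - uz"
  shows "g = (1 + (ux^2 + uy^2) + s^2) / (2 * s)"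
proof -
  have g: "g = s + uz" using assms by simp
  have "1 + (ux^2 + uy^2) = s * (g + uz)" using assms(3) unfolding g by (simp add: power2_eq_square algebra_simps)
  then have h: "1 + (ux*ux + uy*uy) = s* s + 2 * s * uz" unfolding g by (simp add: power2_eq_square algebra_simps)
  show ?thesis using assms(1-2) h unfolding g by (simp add: field_simps power2_eq_square)
qed

lemma alg_s:
  fixes m c q g s ux uy uz At Az Bt Bz E :: real
  assumes "m > 0" "c > 0" "q \<noteq> 0" "g > 0" "s > 0" "s = g - uz"
  shows "((2*ux*((q*(-At/c) + q*((uy/g)*0 - (uz/g)*(Az - 0)))/(m*c))
          + 2*uy*((q*(-Bt/c) + q*((uz/g)*(0 - Bz) - (ux/g)*0))/(m*c))
          + 2*uz*((q*E + q*((ux/g)*(Az - 0) - (uy/g)*(0 - Bz)))/(m*c))) * (inverse g / 2)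
          - (q*E + q*((ux/g)*(Az - 0) - (uy/g)*(0 - Bz)))/(m*c)) * inverse (c * (s/g))
       = (- q * E + m * c^2 / (2 * s) *
           (2 * (q/(m*c^2)) * (- ux * (At/c + Az) - uy * (Bt/c + Bz)))) / (m * c^2)"
proof -
  have g: "g = s + uz" using assms by simp
  show ?thesis using assms(1-5) unfolding g apply (simp add: divide_simps power2_eq_square) apply (simp add: algebra_simps) done
qed


lemma alg_v:
  fixes k X Y P Q R S c :: real
  shows "k\<^sup>2 * (of_nat 2 * ((0 - (P * (1/c) + Q * 1)) * X ^ (2 - Suc 0))
           + of_nat 2 * ((0 - (R * (1/c) + S * 1)) * Y ^ (2 - Suc 0)))
       = 2 * k * (- (k * X) * (P / c + Q) - (k * Y) * (R / c + S))"
  by (simp add: algebra_simps power2_eq_square)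
theorem proposition4:
  fixes m q c :: real
    and A0 Ax Ay Az :: "real \<Rightarrow> real \<Rightarrow> real"
    and I :: "real set"
    and x y z px py pz :: "real \<Rightarrow> real"
  assumes m_pos: "m > 0" and c_pos: "c > 0" and q_nz: "q \<noteq> 0"
    and diffA0: "\<And>w. (\<lambda>v. A0 (fst v) (snd v)) differentiable (at w)"
    and diffAx: "\<And>w. (\<lambda>v. Ax (fst v) (snd v)) differentiable (at w)"
    and diffAy: "\<And>w. (\<lambda>v. Ay (fst v) (snd v)) differentiable (at w)"
    and diffAz: "\<And>w. (\<lambda>v. Az (fst v) (snd v)) differentiable (at w)"
    and I_open: "open I" and I_int: "is_interval I" and I_ne: "I \<noteq> {}"
    and motion: "lorentz_motion m q c A0 Ax Ay Az I x y z px py pz"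
  shows "\<exists>Kx Ky :: real.
    (let ux = (\<lambda>t. px t / (m * c)); uy = (\<lambda>t. py t / (m * c)); uz = (\<lambda>t. pz t / (m * c));
         \<gamma> = (\<lambda>t. sqrt (1 + (ux t)\<^sup>2 + (uy t)\<^sup>2 + (uz t)\<^sup>2));
         s = (\<lambda>t. \<gamma> t - uz t);
         \<xi> = (\<lambda>t. c * t - z t);
         J = \<xi> ` I;
         T = inv_into I \<xi>;
         v = vhat m q c Ax Ay Kx Ky
     in strict_mono_on I \<xi>
      \<and> (\<forall>t\<in>I. T (\<xi> t) = t)
      \<and> (\<forall>\<zeta>\<in>J.
           ux (T \<zeta>) = q / (m * c\<^sup>2) * (Kx - hatf c Ax \<zeta> (z (T \<zeta>)))
         \<and> uy (T \<zeta>) = q / (m * c\<^sup>2) * (Ky - hatf c Ay \<zeta> (z (T \<zeta>)))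
         \<and> ((z \<circ> T) has_real_derivative
              ((1 + v \<zeta> (z (T \<zeta>))) / (2 * (s (T \<zeta>))\<^sup>2) - 1 / 2)) (at \<zeta>)
         \<and> ((s \<circ> T) has_real_derivative
              ((- q * hatf c (Efz c A0 Az) \<zeta> (z (T \<zeta>))
                + m * c\<^sup>2 / (2 * s (T \<zeta>)) * deriv (\<lambda>w. v \<zeta> w) (z (T \<zeta>))) / (m * c\<^sup>2))) (at \<zeta>)
         \<and> \<gamma> (T \<zeta>) = (1 + v \<zeta> (z (T \<zeta>)) + (s (T \<zeta>))\<^sup>2) / (2 * s (T \<zeta>))
         \<and> uz (T \<zeta>) = \<gamma> (T \<zeta>) - s (T \<zeta>)
         \<and> c * T \<zeta> = \<zeta> + z (T \<zeta>))
      \<and> (\<forall>\<zeta>0\<in>J. \<forall>\<zeta>\<in>J. \<zeta>0 \<le> \<zeta> \<longrightarrow>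
           ((\<lambda>\<eta>. ux (T \<eta>) / s (T \<eta>)) has_integral (x (T \<zeta>) - x (T \<zeta>0))) {\<zeta>0..\<zeta>}
         \<and> ((\<lambda>\<eta>. uy (T \<eta>) / s (T \<eta>)) has_integral (y (T \<zeta>) - y (T \<zeta>0))) {\<zeta>0..\<zeta>}
         \<and> ((\<lambda>\<eta>. uz (T \<eta>) / s (T \<eta>)) has_integral (z (T \<zeta>) - z (T \<zeta>0))) {\<zeta>0..\<zeta>}))"
proof -
  define ux where "ux = (\<lambda>t. px t / (m * c))"
  define uy where "uy = (\<lambda>t. py t / (m * c))"
  define uz where "uz = (\<lambda>t. pz t / (m * c))"
  define \<gamma> where "\<gamma> = (\<lambda>t. sqrt (1 + (ux t)\<^sup>2 + (uy t)\<^sup>2 + (uz t)\<^sup>2))"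
  define s where "s = (\<lambda>t. \<gamma> t - uz t)"
  define \<xi> where "\<xi> = (\<lambda>t. c * t - z t)"
  define J where "J = \<xi> ` I"
  define T where "T = inv_into I \<xi>"
  have mc: "m * c > 0" using m_pos c_pos by simp
  have pxe: "px t = m * c * ux t" for t using m_pos c_pos unfolding ux_def by simp
  have pye: "py t = m * c * uy t" for t using m_pos c_pos unfolding uy_def by simp
  have pze: "pz t = m * c * uz t" for t using m_pos c_pos unfolding uz_def by simp
  have Qpos: "1 + (ux t)\<^sup>2 + (uy t)\<^sup>2 + (uz t)\<^sup>2 > 0" for t
    by (intro add_pos_nonneg) auto
  have gsq: "(\<gamma> t)\<^sup>2 = 1 + (ux t)\<^sup>2 + (uy t)\<^sup>2 + (uz t)\<^sup>2" for t
    unfolding \<gamma>_def using Qpos[of t] by simp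
  have gpos: "\<gamma> t > 0" for t
    unfolding \<gamma>_def using Qpos[of t] by simp
  have spos: "s t > 0" for t
  proof -
    have "sqrt ((uz t)\<^sup>2) < \<gamma> t" unfolding \<gamma>_def
      by (rule real_sqrt_less_mono) (use Qpos[of t] in \<open>auto intro!: add_pos_nonneg\<close>)
    then show ?thesis unfolding s_def by simp
  qed
  have Dg: "pden m c (px t) (py t) (pz t) = m * c * \<gamma> t" for t
  proof -
    have "(m*c)\<^sup>2 + (px t)\<^sup>2 + (py t)\<^sup>2 + (pz t)\<^sup>2 = (m*c)\<^sup>2 * (1 + (ux t)\<^sup>2 + (uy t)\<^sup>2 + (uz t)\<^sup>2)"
      by (simp add: pxe pye pze power_mult_distrib algebra_simps)
    then show ?thesis using mc unfolding pden_def \<gamma>_def by (simp add: real_sqrt_mult)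
  qed
  have bx: "px t / pden m c (px t) (py t) (pz t) = ux t / \<gamma> t" for t
    using Dg[of t] pxe[of t] m_pos c_pos gpos[of t] by simp
  have by': "py t / pden m c (px t) (py t) (pz t) = uy t / \<gamma> t" for t
    using Dg[of t] pye[of t] m_pos c_pos gpos[of t] by simp
  have bz: "pz t / pden m c (px t) (py t) (pz t) = uz t / \<gamma> t" for t
    using Dg[of t] pze[of t] m_pos c_pos gpos[of t] by simp
  have mot: "\<And>t. t \<in> I \<Longrightarrow>
     (x has_real_derivative c * (ux t / \<gamma> t)) (at t) \<and>
     (y has_real_derivative c * (uy t / \<gamma> t)) (at t) \<and>
     (z has_real_derivative c * (uz t / \<gamma> t)) (at t) \<and>
     (px has_real_derivative q * (- pd_t Ax t (z t) / c) + q * ((uy t/\<gamma> t) * 0 - (uz t/\<gamma> t) * (pd_z Ax t (z t) - 0))) (at t) \<and>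
     (py has_real_derivative q * (- pd_t Ay t (z t) / c) + q * ((uz t/\<gamma> t) * (0 - pd_z Ay t (z t)) - (ux t/\<gamma> t) * 0)) (at t) \<and>
     (pz has_real_derivative q * Efz c A0 Az t (z t) + q * ((ux t/\<gamma> t) * (pd_z Ax t (z t) - 0) - (uy t/\<gamma> t) * (0 - pd_z Ay t (z t)))) (at t)"
    using motion unfolding lorentz_motion_def Let_def bx by' bz Efx_def Efy_def Bfx_def Bfy_def Bfz_def
    by blast
  note dx = mot[THEN conjunct1]
  note dy = mot[THEN conjunct2, THEN conjunct1]
  note dz = mot[THEN conjunct2, THEN conjunct2, THEN conjunct1]
  note dpx = mot[THEN conjunct2, THEN conjunct2, THEN conjunct2, THEN conjunct1]
  note dpy = mot[THEN conjunct2, THEN conjunct2, THEN conjunct2, THEN conjunct2, THEN conjunct1]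
  note dpz = mot[THEN conjunct2, THEN conjunct2, THEN conjunct2, THEN conjunct2, THEN conjunct2]

  (* conserved transverse canonical momentum *)
  have dA: "((\<lambda>t. F t (z t)) has_real_derivative pd_t F t (z t) * 1 + pd_z F t (z t) * (c * (uz t / \<gamma> t))) (at t)"
    if "t \<in> I" and dF: "\<And>w. (\<lambda>v. F (fst v) (snd v)) differentiable (at w)" for t F
    using partial_chain[where F=F and a="\<lambda>t. t" and tt=t and b=z and a'=1 and S=UNIV
        and b'="c * (uz t / \<gamma> t)"] dF dz[OF that(1)] DERIV_ident by blast
  have convI: "convex I" using I_int by (simp add: is_interval_convex)
  obtain Kx where Kx: "\<forall>t\<in>I. (c/q) * px t + Ax t (z t) = Kx"
  proof -
    have "\<exists>K. \<forall>t\<in>I. (c/q) * px t + Ax t (z t) = K"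
    proof (rule has_field_derivative_zero_constant[OF convI])
      fix t assume t: "t \<in> I"
      have d: "((\<lambda>t. (c/q) * px t + Ax t (z t)) has_real_derivative
          (c/q) * (q * (- pd_t Ax t (z t) / c) + q * ((uy t/\<gamma> t) * 0 - (uz t/\<gamma> t) * (pd_z Ax t (z t) - 0)))
          + (pd_t Ax t (z t) * 1 + pd_z Ax t (z t) * (c * (uz t / \<gamma> t)))) (at t)"
        by (rule DERIV_add[OF DERIV_cmult[OF dpx[OF t]] dA[OF t diffAx]])
      have e: "(c/q) * (q * (- pd_t Ax t (z t) / c) + q * ((uy t/\<gamma> t) * 0 - (uz t/\<gamma> t) * (pd_z Ax t (z t) - 0)))
          + (pd_t Ax t (z t) * 1 + pd_z Ax t (z t) * (c * (uz t / \<gamma> t))) = 0"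
        using c_pos q_nz gpos[of t] by (simp add: field_simps)
      show "((\<lambda>t. (c/q) * px t + Ax t (z t)) has_real_derivative 0) (at t within I)"
        using d unfolding e by (rule has_field_derivative_at_within)
    qed
    then show ?thesis using that by blast
  qed
  obtain Ky where Ky: "\<forall>t\<in>I. (c/q) * py t + Ay t (z t) = Ky"
  proof -
    have "\<exists>K. \<forall>t\<in>I. (c/q) * py t + Ay t (z t) = K"
    proof (rule has_field_derivative_zero_constant[OF convI])
      fix t assume t: "t \<in> I"
      have d: "((\<lambda>t. (c/q) * py t + Ay t (z t)) has_real_derivative
          (c/q) * (q * (- pd_t Ay t (z t) / c) + q * ((uz t/\<gamma> t) * (0 - pd_z Ay t (z t)) - (ux t/\<gamma> t) * 0))
          + (pd_t Ay t (z t) * 1 + pd_z Ay t (z t) * (c * (uz t / \<gamma> t)))) (at t)"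
        by (rule DERIV_add[OF DERIV_cmult[OF dpy[OF t]] dA[OF t diffAy]])
      have e: "(c/q) * (q * (- pd_t Ay t (z t) / c) + q * ((uz t/\<gamma> t) * (0 - pd_z Ay t (z t)) - (ux t/\<gamma> t) * 0))
          + (pd_t Ay t (z t) * 1 + pd_z Ay t (z t) * (c * (uz t / \<gamma> t))) = 0"
        using c_pos q_nz gpos[of t] by (simp add: field_simps)
      show "((\<lambda>t. (c/q) * py t + Ay t (z t)) has_real_derivative 0) (at t within I)"
        using d unfolding e by (rule has_field_derivative_at_within)
    qed
    then show ?thesis using that by blast
  qed
  have uxK: "ux t = q / (m * c\<^sup>2) * (Kx - Ax t (z t))" if "t \<in> I" for t
  proof -
    have "Kx - Ax t (z t) = (c/q) * px t" using Kx that by auto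
    then show ?thesis unfolding ux_def using c_pos m_pos q_nz by (simp add: field_simps power2_eq_square)
  qed
  have uyK: "uy t = q / (m * c\<^sup>2) * (Ky - Ay t (z t))" if "t \<in> I" for t
  proof -
    have "Ky - Ay t (z t) = (c/q) * py t" using Ky that by auto
    then show ?thesis unfolding uy_def using c_pos m_pos q_nz by (simp add: field_simps power2_eq_square)
  qed

  have dxi: "(\<xi> has_real_derivative c * (s t / \<gamma> t)) (at t)" if "t \<in> I" for t
  proof -
    have "(\<xi> has_real_derivative c * 1 - c * (uz t / \<gamma> t)) (at t)"
      unfolding \<xi>_def by (intro DERIV_diff DERIV_cmult DERIV_ident dz that)
    moreover have "c * 1 - c * (uz t / \<gamma> t) = c * (s t / \<gamma> t)"
      using gpos[of t] unfolding s_def by (simp add: field_simps)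
    ultimately show ?thesis by simp
  qed
  have dxipos: "c * (s t / \<gamma> t) > 0" for t using c_pos spos[of t] gpos[of t] by simp
  have smono: "strict_mono_on I \<xi>"
  proof (rule strict_mono_onI)
    fix r t assume r: "r \<in> I" and t: "t \<in> I" and rt: "r < t"
    show "\<xi> r < \<xi> t"
    proof (rule DERIV_pos_imp_increasing[OF rt])
      fix w assume "r \<le> w" "w \<le> t"
      then have "w \<in> I" using mem_is_interval_1_I[OF I_int r t] by blast
      then show "\<exists>y. DERIV \<xi> w :> y \<and> y > 0" using dxi dxipos by blast
    qed
  qed
  have injxi: "inj_on \<xi> I" using smono by (rule strict_mono_on_imp_inj_on)
  have Tx: "T (\<xi> t) = t" if "t \<in> I" for t unfolding T_def using injxi that by simp
  have contxi: "continuous_on I \<xi>"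
    using dxi DERIV_isCont continuous_at_imp_continuous_on by blast
  have dT: "(T has_real_derivative inverse (c * (s t / \<gamma> t))) (at (\<xi> t))" if "t \<in> I" for t
    by (rule inv_deriv[OF I_open that contxi Tx dxi[OF that]]) (use dxipos[of t] in auto)
  have Jint: "is_interval J"
    unfolding J_def is_interval_connected_1
    by (rule connected_continuous_image[OF contxi]) (use I_int is_interval_connected in blast)

  have compT: "((f \<circ> T) has_real_derivative D * inverse (c * (s t / \<gamma> t))) (at (\<xi> t))"
    if "t \<in> I" "(f has_real_derivative D) (at t)" for f D t
    by (rule DERIV_chain) (use that dT Tx in auto)
  have simpd: "c * (a / \<gamma> t) * inverse (c * (s t / \<gamma> t)) = a / s t" for a t
    using c_pos gpos[of t] spos[of t] by (simp add: field_simps)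

  have hatE: "hatf c F (\<xi> t) (z t) = F t (z t)" for F t
    unfolding hatf_def \<xi>_def using c_pos by simp
  have vval: "vhat m q c Ax Ay Kx Ky (\<xi> t) (z t) = (ux t)\<^sup>2 + (uy t)\<^sup>2" if "t \<in> I" for t
    unfolding vhat_def hatE uxK[OF that] uyK[OF that] by (simp add: power_mult_distrib power_divide distrib_left)

  have pointwise: "\<forall>t\<in>I.
           ux (T (\<xi> t)) = q / (m * c\<^sup>2) * (Kx - hatf c Ax (\<xi> t) (z (T (\<xi> t))))
         \<and> uy (T (\<xi> t)) = q / (m * c\<^sup>2) * (Ky - hatf c Ay (\<xi> t) (z (T (\<xi> t))))
         \<and> ((z \<circ> T) has_real_derivative
              ((1 + vhat m q c Ax Ay Kx Ky (\<xi> t) (z (T (\<xi> t)))) / (2 * (s (T (\<xi> t)))\<^sup>2) - 1 / 2)) (at (\<xi> t))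
         \<and> ((s \<circ> T) has_real_derivative
              ((- q * hatf c (Efz c A0 Az) (\<xi> t) (z (T (\<xi> t)))
                + m * c\<^sup>2 / (2 * s (T (\<xi> t))) * deriv (\<lambda>w. vhat m q c Ax Ay Kx Ky (\<xi> t) w) (z (T (\<xi> t)))) / (m * c\<^sup>2))) (at (\<xi> t))
         \<and> \<gamma> (T (\<xi> t)) = (1 + vhat m q c Ax Ay Kx Ky (\<xi> t) (z (T (\<xi> t))) + (s (T (\<xi> t)))\<^sup>2) / (2 * s (T (\<xi> t)))
         \<and> uz (T (\<xi> t)) = \<gamma> (T (\<xi> t)) - s (T (\<xi> t))
         \<and> c * T (\<xi> t) = \<xi> t + z (T (\<xi> t))"
  proof
    fix t assume t: "t \<in> I"
    have sdef: "s t = \<gamma> t - uz t" unfolding s_def by simp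
    have zT: "((z \<circ> T) has_real_derivative
              ((1 + vhat m q c Ax Ay Kx Ky (\<xi> t) (z t)) / (2 * (s t)\<^sup>2) - 1 / 2)) (at (\<xi> t))"
      using compT[OF t dz[OF t]] alg_z[OF c_pos gpos[of t] spos[of t] gsq[of t] sdef]
      unfolding vval[OF t] by simp
    define UX where "UX = (q * (- pd_t Ax t (z t) / c) + q * ((uy t/\<gamma> t) * 0 - (uz t/\<gamma> t) * (pd_z Ax t (z t) - 0))) / (m*c)"
    define UY where "UY = (q * (- pd_t Ay t (z t) / c) + q * ((uz t/\<gamma> t) * (0 - pd_z Ay t (z t)) - (ux t/\<gamma> t) * 0)) / (m*c)"
    define UZ where "UZ = (q * Efz c A0 Az t (z t) + q * ((ux t/\<gamma> t) * (pd_z Ax t (z t) - 0) - (uy t/\<gamma> t) * (0 - pd_z Ay t (z t)))) / (m*c)"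
    have dux: "(ux has_real_derivative UX) (at t)" unfolding ux_def UX_def by (rule DERIV_cdivide[OF dpx[OF t]])
    have duy: "(uy has_real_derivative UY) (at t)" unfolding uy_def UY_def by (rule DERIV_cdivide[OF dpy[OF t]])
    have duz: "(uz has_real_derivative UZ) (at t)" unfolding uz_def UZ_def by (rule DERIV_cdivide[OF dpz[OF t]])
    have dQ: "((\<lambda>t. 1 + (ux t)\<^sup>2 + (uy t)\<^sup>2 + (uz t)\<^sup>2) has_real_derivative
                2 * ux t * UX + 2 * uy t * UY + 2 * uz t * UZ) (at t)"
      by (auto intro!: derivative_eq_intros dux duy duz)
    have dg: "(\<gamma> has_real_derivative (2 * ux t * UX + 2 * uy t * UY + 2 * uz t * UZ) * (inverse (\<gamma> t) / 2)) (at t)"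
      using DERIV_chain2[OF DERIV_real_sqrt[OF Qpos[of t]] dQ] unfolding \<gamma>_def by (simp add: mult.commute)
    have ds: "(s has_real_derivative (2 * ux t * UX + 2 * uy t * UY + 2 * uz t * UZ) * (inverse (\<gamma> t) / 2) - UZ) (at t)"
      unfolding s_def by (rule DERIV_diff[OF dg duz])
    have e: "(\<xi> t + z t) / c = t" unfolding \<xi>_def using c_pos by simp
    have a1: "((\<lambda>w. (\<xi> t + w) / c) has_real_derivative 1 / c) (at (z t))"
      using c_pos by (auto intro!: derivative_eq_intros)
    have hx: "(hatf c Ax (\<xi> t) has_real_derivative pd_t Ax t (z t) * (1/c) + pd_z Ax t (z t) * 1) (at (z t))"
      using partial_chain[where F=Ax and a="\<lambda>w. (\<xi> t + w) / c" and tt="z t" and b="\<lambda>w. w"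
          and a'="1/c" and S=UNIV and b'=1, OF diffAx a1 DERIV_ident]
      unfolding e hatf_def by simp
    have hy: "(hatf c Ay (\<xi> t) has_real_derivative pd_t Ay t (z t) * (1/c) + pd_z Ay t (z t) * 1) (at (z t))"
      using partial_chain[where F=Ay and a="\<lambda>w. (\<xi> t + w) / c" and tt="z t" and b="\<lambda>w. w"
          and a'="1/c" and S=UNIV and b'=1, OF diffAy a1 DERIV_ident]
      unfolding e hatf_def by simp
    note dvv = DERIV_cmult[OF DERIV_add[OF DERIV_power[OF DERIV_diff[OF DERIV_const hx], where n=2]
                   DERIV_power[OF DERIV_diff[OF DERIV_const hy], where n=2]], where c="(q / (m * c\<^sup>2))\<^sup>2"]
    have dv: "deriv (\<lambda>w. vhat m q c Ax Ay Kx Ky (\<xi> t) w) (z t)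
        = 2 * (q / (m * c\<^sup>2)) * (- ux t * (pd_t Ax t (z t) / c + pd_z Ax t (z t)) - uy t * (pd_t Ay t (z t) / c + pd_z Ay t (z t)))"
    proof -
      have dvv': "((\<lambda>w. vhat m q c Ax Ay Kx Ky (\<xi> t) w) has_real_derivative
         (q / (m * c\<^sup>2))\<^sup>2 * (of_nat 2 * ((0 - (pd_t Ax t (z t) * (1/c) + pd_z Ax t (z t) * 1)) * (Kx - hatf c Ax (\<xi> t) (z t)) ^ (2 - Suc 0))
           + of_nat 2 * ((0 - (pd_t Ay t (z t) * (1/c) + pd_z Ay t (z t) * 1)) * (Ky - hatf c Ay (\<xi> t) (z t)) ^ (2 - Suc 0)))) (at (z t))"
        unfolding vhat_def by (rule dvv)
      show ?thesis
        unfolding DERIV_imp_deriv[OF dvv'] hatE uxK[OF t] uyK[OF t]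
        by (rule alg_v)
    qed
    have sT: "((s \<circ> T) has_real_derivative
              ((- q * hatf c (Efz c A0 Az) (\<xi> t) (z t)
                + m * c\<^sup>2 / (2 * s t) * deriv (\<lambda>w. vhat m q c Ax Ay Kx Ky (\<xi> t) w) (z t)) / (m * c\<^sup>2))) (at (\<xi> t))"
      using compT[OF t ds]
      unfolding dv hatE UX_def UY_def UZ_def
        alg_s[OF m_pos c_pos q_nz gpos[of t] spos[of t] sdef] .
    have gg: "\<gamma> t = (1 + vhat m q c Ax Ay Kx Ky (\<xi> t) (z t) + (s t)\<^sup>2) / (2 * s t)"
      unfolding vval[OF t] by (rule alg_g[OF gpos[of t] spos[of t] gsq[of t] sdef])
    show "ux (T (\<xi> t)) = q / (m * c\<^sup>2) * (Kx - hatf c Ax (\<xi> t) (z (T (\<xi> t))))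
         \<and> uy (T (\<xi> t)) = q / (m * c\<^sup>2) * (Ky - hatf c Ay (\<xi> t) (z (T (\<xi> t))))
         \<and> ((z \<circ> T) has_real_derivative
              ((1 + vhat m q c Ax Ay Kx Ky (\<xi> t) (z (T (\<xi> t)))) / (2 * (s (T (\<xi> t)))\<^sup>2) - 1 / 2)) (at (\<xi> t))
         \<and> ((s \<circ> T) has_real_derivative
              ((- q * hatf c (Efz c A0 Az) (\<xi> t) (z (T (\<xi> t)))
                + m * c\<^sup>2 / (2 * s (T (\<xi> t))) * deriv (\<lambda>w. vhat m q c Ax Ay Kx Ky (\<xi> t) w) (z (T (\<xi> t)))) / (m * c\<^sup>2))) (at (\<xi> t))
         \<and> \<gamma> (T (\<xi> t)) = (1 + vhat m q c Ax Ay Kx Ky (\<xi> t) (z (T (\<xi> t))) + (s (T (\<xi> t)))\<^sup>2) / (2 * s (T (\<xi> t)))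
         \<and> uz (T (\<xi> t)) = \<gamma> (T (\<xi> t)) - s (T (\<xi> t))
         \<and> c * T (\<xi> t) = \<xi> t + z (T (\<xi> t))"
      unfolding Tx[OF t] hatE
    proof (intro conjI)
    qed (fact uxK[OF t] uyK[OF t] zT sT[unfolded hatE] gg | simp add: s_def \<xi>_def)+
  qed

  have dcoord: "((f \<circ> T) has_real_derivative u (T \<eta>) / s (T \<eta>)) (at \<eta>)"
    if eta: "\<eta> \<in> J" and df: "\<And>t. t \<in> I \<Longrightarrow> (f has_real_derivative c * (u t / \<gamma> t)) (at t)" for f u \<eta>
  proof -
    obtain t where t: "t \<in> I" "\<eta> = \<xi> t" using eta unfolding J_def by blast
    show ?thesis using compT[OF t(1) df[OF t(1)]] unfolding t(2) Tx[OF t(1)] simpd .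
  qed
  have integ: "((\<lambda>\<eta>. u (T \<eta>) / s (T \<eta>)) has_integral (f (T \<zeta>) - f (T \<zeta>0))) {\<zeta>0..\<zeta>}"
    if "\<zeta>0 \<in> J" "\<zeta> \<in> J" "\<zeta>0 \<le> \<zeta>" "\<And>t. t \<in> I \<Longrightarrow> (f has_real_derivative c * (u t / \<gamma> t)) (at t)"
    for f u \<zeta>0 \<zeta>
  proof -
    have "((\<lambda>\<eta>. u (T \<eta>) / s (T \<eta>)) has_integral ((f \<circ> T) \<zeta> - (f \<circ> T) \<zeta>0)) {\<zeta>0..\<zeta>}"
    proof (rule fundamental_theorem_of_calculus[OF that(3)])
      fix \<eta> assume "\<eta> \<in> {\<zeta>0..\<zeta>}"
      then have "\<eta> \<in> J" using mem_is_interval_1_I[OF Jint that(1) that(2)] by auto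
      then show "((f \<circ> T) has_vector_derivative u (T \<eta>) / s (T \<eta>)) (at \<eta> within {\<zeta>0..\<zeta>})"
        using dcoord[OF _ that(4)] has_real_derivative_iff_has_vector_derivative
          has_vector_derivative_at_within by blast
    qed
    then show ?thesis by simp
  qed

  have main: "strict_mono_on I \<xi>
      \<and> (\<forall>t\<in>I. T (\<xi> t) = t)
      \<and> (\<forall>\<zeta>\<in>J.
           ux (T \<zeta>) = q / (m * c\<^sup>2) * (Kx - hatf c Ax \<zeta> (z (T \<zeta>)))
         \<and> uy (T \<zeta>) = q / (m * c\<^sup>2) * (Ky - hatf c Ay \<zeta> (z (T \<zeta>)))
         \<and> ((z \<circ> T) has_real_derivative
              ((1 + vhat m q c Ax Ay Kx Ky \<zeta> (z (T \<zeta>))) / (2 * (s (T \<zeta>))\<^sup>2) - 1 / 2)) (at \<zeta>)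
         \<and> ((s \<circ> T) has_real_derivative
              ((- q * hatf c (Efz c A0 Az) \<zeta> (z (T \<zeta>))
                + m * c\<^sup>2 / (2 * s (T \<zeta>)) * deriv (\<lambda>w. vhat m q c Ax Ay Kx Ky \<zeta> w) (z (T \<zeta>))) / (m * c\<^sup>2))) (at \<zeta>)
         \<and> \<gamma> (T \<zeta>) = (1 + vhat m q c Ax Ay Kx Ky \<zeta> (z (T \<zeta>)) + (s (T \<zeta>))\<^sup>2) / (2 * s (T \<zeta>))
         \<and> uz (T \<zeta>) = \<gamma> (T \<zeta>) - s (T \<zeta>)
         \<and> c * T \<zeta> = \<zeta> + z (T \<zeta>))
      \<and> (\<forall>\<zeta>0\<in>J. \<forall>\<zeta>\<in>J. \<zeta>0 \<le> \<zeta> \<longrightarrow>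
           ((\<lambda>\<eta>. ux (T \<eta>) / s (T \<eta>)) has_integral (x (T \<zeta>) - x (T \<zeta>0))) {\<zeta>0..\<zeta>}
         \<and> ((\<lambda>\<eta>. uy (T \<eta>) / s (T \<eta>)) has_integral (y (T \<zeta>) - y (T \<zeta>0))) {\<zeta>0..\<zeta>}
         \<and> ((\<lambda>\<eta>. uz (T \<eta>) / s (T \<eta>)) has_integral (z (T \<zeta>) - z (T \<zeta>0))) {\<zeta>0..\<zeta>})"
  proof (intro conjI ballI impI)
    show "strict_mono_on I \<xi>" by (rule smono)
  next
    fix t assume "t \<in> I" then show "T (\<xi> t) = t" by (rule Tx)
  next
    fix \<zeta>0 \<zeta> assume "\<zeta>0 \<in> J" "\<zeta> \<in> J" "\<zeta>0 \<le> \<zeta>"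
    note h = this
    show "((\<lambda>\<eta>. ux (T \<eta>) / s (T \<eta>)) has_integral (x (T \<zeta>) - x (T \<zeta>0))) {\<zeta>0..\<zeta>}"
      by (rule integ[OF h dx])
    show "((\<lambda>\<eta>. uy (T \<eta>) / s (T \<eta>)) has_integral (y (T \<zeta>) - y (T \<zeta>0))) {\<zeta>0..\<zeta>}"
      by (rule integ[OF h dy])
    show "((\<lambda>\<eta>. uz (T \<eta>) / s (T \<eta>)) has_integral (z (T \<zeta>) - z (T \<zeta>0))) {\<zeta>0..\<zeta>}"
      by (rule integ[OF h dz])
  qed (use pointwise in \<open>auto simp: J_def\<close>)
  show ?thesis
    apply (rule exI[of _ Kx], rule exI[of _ Ky])
    using main unfolding Let_def ux_def uy_def uz_def \<gamma>_def s_def \<xi>_def J_def T_def .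
qed
end
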